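(* Each of the semantics $\mathit{stg}$, $\mathit{tfstg2}$ and $\mathit{stg1.5}$ fails to be $\preceq^E_\cap$-skepticism adequate and fails to be $\preceq^E_W$-skepticism adequate.
   Context: An argumentation framework (AF) is $\mathcal{F}=(A_{\mathcal{F}},R_{\mathcal{F}})$ with $R_{\mathcal{F}}\subseteq A_{\mathcal{F}}\times A_{\mathcal{F}}$; $a\rightarrow b$ means $(a,b)\in R_{\mathcal{F}}$. $\mathrm{conf}(\mathcal{F})=\{(x,y):(x,y)\in R_{\mathcal{F}}\text{ or }(y,x)\in R_{\mathcal{F}}\}$. $\tau_1\preceq^E_\cap\tau_2$ iff $\bigcap_{S_1\in\tau_1}S_1\subseteq\bigcap_{S_2\in\tau_2}S_2$; $\tau_1\preceq^E_W\tau_2$ iff for every $S_2\in\tau_2$ there is $S_1\in\tau_1$ with $S_1\subseteq S_2$. A semantics $\sigma$ is $\preceq$-skepticism adequate if for any AFs $\mathcal{F},\mathcal{G}$ on the same argument set with $R_{\mathcal{F}}\supseteq R_{\mathcal{G}}$ and $\mathrm{conf}(\mathcal{F})=\mathrm{conf}(\mathcal{G})$, $\sigma(\mathcal{F})\preceq\sigma(\mathcal{G})$. $\mathcal{F}|_B=(A_{\mathcal{F}}\cap B,R_{\mathcal{F}}\cap(B\times B))$. Conflict-free: no $a,b\in S$ with $a\rightarrow b$; $S^\oplus=S\cup\{x:\exists y\in S,\ y\rightarrow x\}$; $\mathit{stg}(\mathcal{F})$: conflict-free $S$ with no conflict-free $T$ such that $S^\oplus\subsetneq T^\oplus$. $\mathrm{SCC}(a)$: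 set of $b$ with directed attack paths (possibly of length 0) from $a$ to $b$ and back. $D_S(X)=\{b\in X:\exists a\in S\setminus X,\ a\rightarrow b\}$. $\mathit{tfstg2}$: $C^0_S(a)=\mathrm{SCC}(a)$; $C^{\alpha+1}_S(a)$ = component of $a$ in $\mathcal{F}|_{C^\alpha_S(a)\setminus D_S(C^\alpha_S(a))}$; for limit $\lambda$, component of $a$ in $\mathcal{F}|_{\bigcap_{\alpha<\lambda}C^\alpha_S(a)}$; $\alpha_S(a)$ = least $\alpha$ with $a\notin C^\alpha_S(a)$ or $C^{\alpha+1}_S(a)=C^\alpha_S(a)$; $S\in\mathit{tfstg2}(\mathcal{F})$ iff conflict-free and for each $a$, $a\notin C^{\alpha_S(a)}_S(a)$ or $S\cap C^{\alpha_S(a)}_S(a)$ is a stage extension of $\mathcal{F}|_{C^{\alpha_S(a)}_S(a)}$. $\mathit{stg1.5}$: $S$ conflict-free and for each strongly connected component $X$ of $\mathcal{F}$, $S\cap X$ is a stage extension of $\mathcal{F}|_{X\setminus D_S(X)}$. *)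

theory Defs
  imports Main
begin

type_synonym 'a af = "'a set \<times> ('a \<times> 'a) set"

definition is_AF :: "'a af \<Rightarrow> bool" where
  "is_AF F \<longleftrightarrow> snd F \<subseteq> fst F \<times> fst F"

definition conf :: "'a af \<Rightarrow> ('a \<times> 'a) set" where
  "conf F = {(x, y). (x, y) \<in> snd F \<or> (y, x) \<in> snd F}"

definition restr :: "'a af \<Rightarrow> 'a set \<Rightarrow> 'a af" where
  "restr F B = (fst F \<inter> B, snd F \<inter> (B \<times> B))"

definition conflict_free :: "'a af \<Rightarrow> 'a set \<Rightarrow> bool" where
  "conflict_free F S \<longleftrightarrow> S \<subseteq> fst F \<and> (\<forall>a\<in>S. \<forall>b\<in>S. (a, b) \<notin> snd F)"

definition range_af :: "'a af \<Rightarrow> 'a set \<Rightarrow> 'a set" where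
  "range_af F S = S \<union> {x. \<exists>y\<in>S. (y, x) \<in> snd F}"

definition stg :: "'a af \<Rightarrow> 'a set set" where
  "stg F = {S. conflict_free F S \<and>
              \<not> (\<exists>T. conflict_free F T \<and> range_af F S \<subset> range_af F T)}"

text \<open>Strongly connected component of a (empty if a is not an argument).\<close>
definition scc :: "'a af \<Rightarrow> 'a \<Rightarrow> 'a set" where
  "scc F a = {b \<in> fst F. (a, b) \<in> (snd F)\<^sup>* \<and> (b, a) \<in> (snd F)\<^sup>*}"

definition sccs :: "'a af \<Rightarrow> 'a set set" where
  "sccs F = scc F ` fst F"

definition D_S :: "'a af \<Rightarrow> 'a set \<Rightarrow> 'a set \<Rightarrow> 'a set" where
  "D_S F S X = {b \<in> X. \<exists>a \<in> S - X. (a, b) \<in> snd F}"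

text \<open>The transfinite sequence C^alpha_S(a): the set of all its stages is the least set
  containing SCC(a) that is closed under the successor step and under the limit step
  (applied to nonempty chains of stages).\<close>
inductive_set tf_stages :: "'a af \<Rightarrow> 'a set \<Rightarrow> 'a \<Rightarrow> 'a set set"
  for F :: "'a af" and S :: "'a set" and a :: 'a where
  base: "scc F a \<in> tf_stages F S a"
| succ: "X \<in> tf_stages F S a \<Longrightarrow> scc (restr F (X - D_S F S X)) a \<in> tf_stages F S a"
| lim: "(\<And>Z. Z \<in> Y \<Longrightarrow> Z \<in> tf_stages F S a) \<Longrightarrow> Y \<noteq> {} \<Longrightarrow> Complete_Partial_Order.chain (\<subseteq>) Y \<Longrightarrow>
        scc (restr F (\<Inter>Y)) a \<in> tf_stages F S a"

text \<open>The decreasing sequence stabilises; its final value is the intersection of all stages.\<close>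
definition tf_final :: "'a af \<Rightarrow> 'a set \<Rightarrow> 'a \<Rightarrow> 'a set" where
  "tf_final F S a = \<Inter> (tf_stages F S a)"

definition tfstg2 :: "'a af \<Rightarrow> 'a set set" where
  "tfstg2 F = {S. conflict_free F S \<and>
     (\<forall>a \<in> fst F. a \<notin> tf_final F S a \<or>
                  S \<inter> tf_final F S a \<in> stg (restr F (tf_final F S a)))}"

definition stg15 :: "'a af \<Rightarrow> 'a set set" where
  "stg15 F = {S. conflict_free F S \<and>
     (\<forall>X \<in> sccs F. S \<inter> X \<in> stg (restr F (X - D_S F S X)))}"

definition le_cap :: "'a set set \<Rightarrow> 'a set set \<Rightarrow> bool" where
  "le_cap t1 t2 \<longleftrightarrow> \<Inter> t1 \<subseteq> \<Inter> t2"

definition le_W :: "'a set set \<Rightarrow> 'a set set \<Rightarrow> bool" where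
  "le_W t1 t2 \<longleftrightarrow> (\<forall>S2 \<in> t2. \<exists>S1 \<in> t1. S1 \<subseteq> S2)"

definition skept_adequate ::
  "('a set set \<Rightarrow> 'a set set \<Rightarrow> bool) \<Rightarrow> ('a af \<Rightarrow> 'a set set) \<Rightarrow> bool" where
  "skept_adequate le \<sigma> \<longleftrightarrow>
     (\<forall>F G. is_AF F \<and> is_AF G \<and> fst F = fst G \<and> snd G \<subseteq> snd F \<and> conf F = conf G
        \<longrightarrow> le (\<sigma> F) (\<sigma> G))"

end

theory Submission
  imports Defs
begin

lemma sc_tf_stages:
  assumes af: "is_AF F" and scA: "\<And>a. a \<in> fst F \<Longrightarrow> scc F a = fst F"
    and S: "S \<subseteq> fst F" and a: "a \<in> fst F"
  shows "tf_stages F S a = {fst F}"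
proof
  have rF: "restr F (fst F) = F" using af unfolding is_AF_def restr_def
    by (cases F) auto
  have D: "D_S F S (fst F) = {}" using S unfolding D_S_def by auto
  show "tf_stages F S a \<subseteq> {fst F}"
  proof
    fix X assume "X \<in> tf_stages F S a"
    then show "X \<in> {fst F}"
    proof (induction rule: tf_stages.induct)
      case base then show ?case using scA a by simp
    next
      case (succ X) then show ?case using D rF scA a by simp
    next
      case (lim Y)
      then have "Y = {fst F}" by auto
      then show ?case using rF scA a by simp
    qed
  qed
  show "{fst F} \<subseteq> tf_stages F S a"
    using tf_stages.base[of F a S] scA a by simp
qed

lemma sc_tfstg2:
  assumes af: "is_AF F" and scA: "\<And>a. a \<in> fst F \<Longrightarrow> scc F a = fst F"
    and ne: "fst F \<noteq> {}"
  shows "tfstg2 F = stg F"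
proof -
  have rF: "restr F (fst F) = F" using af unfolding is_AF_def restr_def
    by (cases F) auto
  have fin: "\<And>S a. S \<subseteq> fst F \<Longrightarrow> a \<in> fst F \<Longrightarrow> tf_final F S a = fst F"
    unfolding tf_final_def using sc_tf_stages[OF af scA] by simp
  have cf: "\<And>S. S \<in> stg F \<Longrightarrow> conflict_free F S" unfolding stg_def by simp
  show ?thesis
  proof (intro set_eqI iffI)
    fix S assume "S \<in> tfstg2 F"
    then have c: "conflict_free F S" and h: "\<forall>a \<in> fst F. a \<notin> tf_final F S a \<or>
                  S \<inter> tf_final F S a \<in> stg (restr F (tf_final F S a))"
      unfolding tfstg2_def by auto
    have Ss: "S \<subseteq> fst F" using c unfolding conflict_free_def by simp
    obtain a where "a \<in> fst F" using ne by auto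
    then show "S \<in> stg F" using h fin[OF Ss] rF Ss by (metis Int_absorb2)
  next
    fix S assume st: "S \<in> stg F"
    then have c: "conflict_free F S" by (rule cf)
    have Ss: "S \<subseteq> fst F" using c unfolding conflict_free_def by simp
    show "S \<in> tfstg2 F" unfolding tfstg2_def using c fin[OF Ss] rF Ss st
      by (simp add: Int_absorb2)
  qed
qed

lemma sc_stg15:
  assumes af: "is_AF F" and scA: "\<And>a. a \<in> fst F \<Longrightarrow> scc F a = fst F"
    and ne: "fst F \<noteq> {}"
  shows "stg15 F = stg F"
proof -
  have rF: "restr F (fst F) = F" using af unfolding is_AF_def restr_def
    by (cases F) auto
  have sc: "sccs F = {fst F}" unfolding sccs_def using scA ne by auto
  have D: "\<And>S. S \<subseteq> fst F \<Longrightarrow> D_S F S (fst F) = {}" unfolding D_S_def by auto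
  have cf: "\<And>S. S \<in> stg F \<Longrightarrow> conflict_free F S" unfolding stg_def by simp
  show ?thesis
  proof (intro set_eqI iffI)
    fix S assume "S \<in> stg15 F"
    then have c: "conflict_free F S" and h: "S \<inter> fst F \<in> stg (restr F (fst F - D_S F S (fst F)))"
      unfolding stg15_def sc by auto
    have Ss: "S \<subseteq> fst F" using c unfolding conflict_free_def by simp
    show "S \<in> stg F" using h D[OF Ss] rF Ss by (simp add: Int_absorb2)
  next
    fix S assume st: "S \<in> stg F"
    then have c: "conflict_free F S" by (rule cf)
    have Ss: "S \<subseteq> fst F" using c unfolding conflict_free_def by simp
    show "S \<in> stg15 F" unfolding stg15_def sc using c D[OF Ss] rF Ss st
      by (simp add: Int_absorb2)
  qed
qed

definition G0 :: "nat af" where "G0 = ({0,1,2}, {(0,1),(1,2),(2,0)})"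
definition F0 :: "nat af" where "F0 = ({0,1,2}, {(0,1),(1,0),(1,2),(2,0)})"

lemma G0_rt: "x \<in> {0,1,2} \<Longrightarrow> y \<in> {0,1,2} \<Longrightarrow> (x, y) \<in> (snd G0)\<^sup>*"
proof -
  have r: "(0,1) \<in> (snd G0)\<^sup>*" "(1,2) \<in> (snd G0)\<^sup>*" "(2,0) \<in> (snd G0)\<^sup>*"
    unfolding G0_def by auto
  have "(0,2) \<in> (snd G0)\<^sup>*" "(1,0) \<in> (snd G0)\<^sup>*" "(2,1) \<in> (snd G0)\<^sup>*"
    using r by (meson rtrancl_trans)+
  then show "x \<in> {0,1,2} \<Longrightarrow> y \<in> {0,1,2} \<Longrightarrow> (x, y) \<in> (snd G0)\<^sup>*" using r by auto
qed

lemma F0_rt: "x \<in> {0,1,2} \<Longrightarrow> y \<in> {0,1,2} \<Longrightarrow> (x, y) \<in> (snd F0)\<^sup>*"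
proof -
  have "snd G0 \<subseteq> snd F0" unfolding G0_def F0_def by auto
  then show "x \<in> {0,1,2} \<Longrightarrow> y \<in> {0,1,2} \<Longrightarrow> (x, y) \<in> (snd F0)\<^sup>*"
    using G0_rt rtrancl_mono by blast
qed

lemma G0_scc: "a \<in> fst G0 \<Longrightarrow> scc G0 a = fst G0"
  unfolding scc_def using G0_rt by (auto simp: G0_def)

lemma F0_scc: "a \<in> fst F0 \<Longrightarrow> scc F0 a = fst F0"
  unfolding scc_def using F0_rt by (auto simp: F0_def)

lemma G0_af: "is_AF G0" unfolding is_AF_def G0_def by auto
lemma F0_af: "is_AF F0" unfolding is_AF_def F0_def by auto

lemma F0_range_sub: "conflict_free F0 T \<Longrightarrow> range_af F0 T \<subseteq> {0,1,2}"
  unfolding conflict_free_def range_af_def F0_def by auto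

lemma G0_range_sub: "conflict_free G0 T \<Longrightarrow> range_af G0 T \<subseteq> {0,1,2}"
  unfolding conflict_free_def range_af_def G0_def by auto

lemma F0_aux: "conflict_free F0 S \<Longrightarrow> 1 \<notin> S \<Longrightarrow> 1 \<in> range_af F0 S \<Longrightarrow> 2 \<in> range_af F0 S \<Longrightarrow> False"
proof -
  assume c: "conflict_free F0 S" and n: "1 \<notin> S" and r1: "1 \<in> range_af F0 S" and r2: "2 \<in> range_af F0 S"
  from r1 n have "0 \<in> S" unfolding range_af_def F0_def by auto
  moreover from r2 n have "2 \<in> S" unfolding range_af_def F0_def by auto
  ultimately show False using c unfolding conflict_free_def F0_def by auto
qed

lemma F0_stg: "S \<in> stg F0 \<Longrightarrow> 1 \<in> S"
proof (rule ccontr)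
  assume st: "S \<in> stg F0" and n: "1 \<notin> S"
  then have c: "conflict_free F0 S" and mx: "\<not> (\<exists>T. conflict_free F0 T \<and> range_af F0 S \<subset> range_af F0 T)"
    unfolding stg_def by auto
  have c1: "conflict_free F0 {1}" unfolding conflict_free_def F0_def by auto
  have r1: "range_af F0 {1} = {0,1,2}" unfolding range_af_def F0_def by auto
  have "range_af F0 S \<subseteq> {0,1,2}" by (rule F0_range_sub[OF c])
  moreover have "range_af F0 S \<noteq> {0,1,2}" using F0_aux[OF c n] by auto
  ultimately show False using mx c1 r1 by blast
qed

lemma G0_aux: "conflict_free G0 T \<Longrightarrow> 0 \<in> range_af G0 T \<Longrightarrow> 1 \<in> range_af G0 T \<Longrightarrow> 2 \<in> range_af G0 T \<Longrightarrow> False"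
proof -
  assume c: "conflict_free G0 T" and r: "0 \<in> range_af G0 T" "1 \<in> range_af G0 T" "2 \<in> range_af G0 T"
  have cc: "\<not> (0 \<in> T \<and> 1 \<in> T)" "\<not> (1 \<in> T \<and> 2 \<in> T)" "\<not> (2 \<in> T \<and> 0 \<in> T)"
    using c unfolding conflict_free_def G0_def by auto
  have m: "0 \<in> T \<or> 2 \<in> T" "1 \<in> T \<or> 0 \<in> T" "2 \<in> T \<or> 1 \<in> T"
    using r unfolding range_af_def G0_def by auto
  show False using cc m by blast
qed

lemma G0_stg: "{0} \<in> stg G0"
  unfolding stg_def
proof (intro CollectI conjI notI)
  show c: "conflict_free G0 {0}" unfolding conflict_free_def G0_def by auto
  assume "\<exists>T. conflict_free G0 T \<and> range_af G0 {0} \<subset> range_af G0 T"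
  then obtain T where cT: "conflict_free G0 T" and lt: "range_af G0 {0} \<subset> range_af G0 T" by blast
  have r0: "range_af G0 {0} = {0,1}" unfolding range_af_def G0_def by auto
  have "range_af G0 T \<subseteq> {0,1,2}" by (rule G0_range_sub[OF cT])
  with lt r0 have "range_af G0 T = {0,1,2}" by auto
  then show False using G0_aux[OF cT] by auto
qed

lemma base_facts: "is_AF F0 \<and> is_AF G0 \<and> fst F0 = fst G0 \<and> snd G0 \<subseteq> snd F0 \<and> conf F0 = conf G0"
  using F0_af G0_af unfolding F0_def G0_def conf_def by auto

lemma not_cap: "\<not> le_cap (stg F0) (stg G0)"
proof
  assume "le_cap (stg F0) (stg G0)"
  moreover have "1 \<in> \<Inter> (stg F0)" using F0_stg by auto
  moreover have "1 \<notin> \<Inter> (stg G0)" using G0_stg by auto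
  ultimately show False unfolding le_cap_def by auto
qed

lemma not_W: "\<not> le_W (stg F0) (stg G0)"
  unfolding le_W_def using G0_stg F0_stg by fastforce

lemma not_adequate_of: "\<not> le (\<sigma> F0) (\<sigma> G0) \<Longrightarrow> \<not> skept_adequate le \<sigma>"
  unfolding skept_adequate_def using base_facts by blast

lemma F0_ne: "fst F0 \<noteq> {}" unfolding F0_def by simp
lemma G0_ne: "fst G0 \<noteq> {}" unfolding G0_def by simp
lemma tfF: "tfstg2 F0 = stg F0" by (rule sc_tfstg2[OF F0_af F0_scc F0_ne])
lemma tfG: "tfstg2 G0 = stg G0" by (rule sc_tfstg2[OF G0_af G0_scc G0_ne])
lemma s15F: "stg15 F0 = stg F0" by (rule sc_stg15[OF F0_af F0_scc F0_ne])
lemma s15G: "stg15 G0 = stg G0" by (rule sc_stg15[OF G0_af G0_scc G0_ne])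

theorem theorem17:
  shows "\<not> skept_adequate le_cap (stg :: nat af \<Rightarrow> nat set set) \<and>
         \<not> skept_adequate le_W (stg :: nat af \<Rightarrow> nat set set) \<and>
         \<not> skept_adequate le_cap (tfstg2 :: nat af \<Rightarrow> nat set set) \<and>
         \<not> skept_adequate le_W (tfstg2 :: nat af \<Rightarrow> nat set set) \<and>
         \<not> skept_adequate le_cap (stg15 :: nat af \<Rightarrow> nat set set) \<and>
         \<not> skept_adequate le_W (stg15 :: nat af \<Rightarrow> nat set set)"
proof -
  have 1: "\<not> skept_adequate le_cap (stg :: nat af \<Rightarrow> nat set set)"
    by (rule not_adequate_of) (rule not_cap)
  have 2: "\<not> skept_adequate le_W (stg :: nat af \<Rightarrow> nat set set)"
    by (rule not_adequate_of) (rule not_W)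
  have 3: "\<not> skept_adequate le_cap (tfstg2 :: nat af \<Rightarrow> nat set set)"
    by (rule not_adequate_of) (unfold tfF tfG, rule not_cap)
  have 4: "\<not> skept_adequate le_W (tfstg2 :: nat af \<Rightarrow> nat set set)"
    by (rule not_adequate_of) (unfold tfF tfG, rule not_W)
  have 5: "\<not> skept_adequate le_cap (stg15 :: nat af \<Rightarrow> nat set set)"
    by (rule not_adequate_of) (unfold s15F s15G, rule not_cap)
  have 6: "\<not> skept_adequate le_W (stg15 :: nat af \<Rightarrow> nat set set)"
    by (rule not_adequate_of) (unfold s15F s15G, rule not_W)
  show ?thesis using 1 2 3 4 5 6 by blast
qed

end
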